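(* Consider the two-agent zero-sum dynamic game with $K$ stages, dynamics constraints, and control bound constraints $a^i_t\le u^i_t\le b^i_t$ described in the context. Then the states and controls of any local FBNE at which strict complementarity holds (and whose policies satisfy the standing policy assumption in the context) also satisfy the first-order necessary conditions (COL1)–(COL6) for a local OLNE of the game.
   Context: Two-agent zero-sum discrete-time dynamic game with horizon $K\in\mathbb N$. States $x_t\in\mathbb R^n$, known initial state $x_1$; controls $u^i_t\in\mathbb R^{m_i}$, $i\in\{1,2\}$, subject to componentwise bounds $a^i_t\le u^i_t\le b^i_t$. Dynamics $x_{t+1}=f_t(x_t,u^1_t,u^2_t)$, $f_t$ smooth. Agent 1 has stage costs $\ell_t(x_t,u^1_t,u^2_t)$ and terminal cost $\ell_{K+1}(x_{K+1})$; $\ell^1_t=\ell_t$, $\ell^2_t=-\ell_t$, sufficiently smooth (possibly nonconvex). For agent $i$, $-i$ is the other agent; reordered arguments $\ell^i_t(x_t,u^i_t,u^{-i}_t)$, $f_t(x_t,u^i_t,u^{-i}_t)$. $T_t:=\{t,\dots,K\}$. $\perp$ denotes componentwise complementarity. Open-loop problem of agent $i$: minimize $\sum_{t=1}^K\ell^i_t+\ell^i_{K+1}$ over $x_{2:K+1},u^i_{1:K}$ s.t. dynamics and $a^i_t\le u^i_t\le b^i_t$. First-order conditions: for each $i$ there exist $\lambda^i_t,\underline\nu^i_t,\bar\nu^i_t$ ($t\in[K]$) with (COL1) $\nabla_{x_t}\ell^i_t+(\nabla_{x_t}f_t)^\top\lambda^i_t-\lambda^i_{t-1}=0$, $t=2,\dots,K$;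 (COL2) $\nabla_{u^i_t}\ell^i_t+(\nabla_{u^i_t}f_t)^\top\lambda^i_t-\underline\nu^i_t+\bar\nu^i_t=0$, $t\in[K]$; (COL3) $\nabla_{x_{K+1}}\ell^i_{K+1}-\lambda^i_K=0$; (COL4) dynamics hold; (COL5) $a^i_t\le u^i_t\perp\underline\nu^i_t\ge0$; (COL6) $0\le\bar\nu^i_t\perp u^i_t\le b^i_t$. Feedback problem of agent $i$ at time $t$, given differentiable policies $\pi^{-i}_s$: minimize $\sum_{s=t}^K\ell^i_s+\ell^i_{K+1}$ over $u^i_{t:K},u^{-i}_{t+1:K},x_{t+1:K+1}$ s.t. dynamics ($s\in T_t$), $u^{-i}_s=\pi^{-i}_s(x_s)$ ($s\in T_{t+1}$), $a^i_s\le u^i_s\le b^i_s$ ($s\in T_t$). First-order (FBNE necessary) conditions: there exist $\lambda^i_s,\underline\nu^i_s,\bar\nu^i_s$ ($s\in T_t$), $\psi^i_s$ ($s\in T_{t+1}$) with (CFB1) $\nabla_{u^{-i}_s}\ell^i_s+(\nabla_{u^{-i}_s}f_s)^\top\lambda^i_s-\psi^i_s=0$, $s\in T_{t+1}$; (CFB2) $\nabla_{u^i_s}\ell^i_s+(\nabla_{u^i_s}f_s)^\top\lambda^i_s-\underline\nu^i_s+\bar\nu^i_s=0$, $s\in T_t$; (CFB3) $\nabla_{x_{K+1}}\ell^i_{K+1}-\lambda^i_K=0$; (CFB4) dynamics for $s\in T_t$; (CFB5) $u^{-i}_s=\pi^{-i}_s(x_s)$, $s\in T_{t+1}$; (CFB6)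 $a^i_s\le u^i_s\perp\underline\nu^i_s\ge0$, $0\le\bar\nu^i_s\perp u^i_s\le b^i_s$, $s\in T_t$; (CFB7) $\nabla_{x_s}\ell^i_s-\lambda^i_{s-1}+(\nabla_{x_s}f_s)^\top\lambda^i_s+(\nabla_{x_s}\pi^{-i}_s)^\top\psi^i_s=0$, $s\in T_{t+1}$. A local FBNE is a trajectory generated by policies $\pi^1_t,\pi^2_t$ that locally solves all these problems for all $t$ and $i$. Strict complementarity: for every component $j$, exactly one of $[u^i_s]_j-[a^i_s]_j$ and $[\underline\nu^i_s]_j$ is zero, and exactly one of $[b^i_s]_j-[u^i_s]_j$ and $[\bar\nu^i_s]_j$ is zero. Standing policy assumption (taken as a consequence of strict complementarity): whenever a bound on $[u^i_s]_j$ is active at the equilibrium, the $j$-th row of $\nabla_{x_s}\pi^i_s(x_s)$ is zero. *)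

theory Defs
  imports "HOL-Analysis.Analysis"
begin

definition grad :: "(real^'n \<Rightarrow> real) \<Rightarrow> real^'n \<Rightarrow> real^'n" where
  "grad g z = (\<chi> j. frechet_derivative g (at z) (axis j 1))"

definition jacT :: "(real^'n \<Rightarrow> real^'m) \<Rightarrow> real^'n \<Rightarrow> real^'m \<Rightarrow> real^'n" where
  "jacT F z lam = (\<chi> j. lam \<bullet> frechet_derivative F (at z) (axis j 1))"

definition box_compl :: "real^'m \<Rightarrow> real^'m \<Rightarrow> real^'m \<Rightarrow> real^'m \<Rightarrow> real^'m \<Rightarrow> bool" where
  "box_compl a b u nl nu \<longleftrightarrow>
     (\<forall>j. a$j \<le> u$j \<and> 0 \<le> nl$j \<and> (u$j - a$j) * nl$j = 0) \<and>
     (\<forall>j. 0 \<le> nu$j \<and> u$j \<le> b$j \<and> nu$j * (b$j - u$j) = 0)"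

definition strict_compl :: "real^'m \<Rightarrow> real^'m \<Rightarrow> real^'m \<Rightarrow> real^'m \<Rightarrow> real^'m \<Rightarrow> bool" where
  "strict_compl a b u nl nu \<longleftrightarrow>
     (\<forall>j. (u$j - a$j = 0) \<noteq> (nl$j = 0)) \<and> (\<forall>j. (b$j - u$j = 0) \<noteq> (nu$j = 0))"

text \<open>Generic agent "me" with own controls of type 'a and opponent controls of type 'b;
  F and L take reordered arguments (x, own control, other control); Lf is the terminal cost.\<close>

definition COL ::
  "nat \<Rightarrow> (nat \<Rightarrow> real^'n \<Rightarrow> real^'a \<Rightarrow> real^'b \<Rightarrow> real^'n) \<Rightarrow>
   (nat \<Rightarrow> real^'n \<Rightarrow> real^'a \<Rightarrow> real^'b \<Rightarrow> real) \<Rightarrow> (real^'n \<Rightarrow> real) \<Rightarrow>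
   (nat \<Rightarrow> real^'a) \<Rightarrow> (nat \<Rightarrow> real^'a) \<Rightarrow>
   (nat \<Rightarrow> real^'n) \<Rightarrow> (nat \<Rightarrow> real^'a) \<Rightarrow> (nat \<Rightarrow> real^'b) \<Rightarrow>
   (nat \<Rightarrow> real^'n) \<Rightarrow> (nat \<Rightarrow> real^'a) \<Rightarrow> (nat \<Rightarrow> real^'a) \<Rightarrow> bool" where
  "COL K F L Lf a b x u v lam nl nu \<longleftrightarrow>
     (\<forall>s\<in>{2..K}. grad (\<lambda>y. L s y (u s) (v s)) (x s)
                    + jacT (\<lambda>y. F s y (u s) (v s)) (x s) (lam s) - lam (s - 1) = 0) \<and>
     (\<forall>s\<in>{1..K}. grad (\<lambda>w. L s (x s) w (v s)) (u s)
                    + jacT (\<lambda>w. F s (x s) w (v s)) (u s) (lam s) - nl s + nu s = 0) \<and>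
     grad Lf (x (K + 1)) - lam K = 0 \<and>
     (\<forall>s\<in>{1..K}. x (s + 1) = F s (x s) (u s) (v s)) \<and>
     (\<forall>s\<in>{1..K}. box_compl (a s) (b s) (u s) (nl s) (nu s))"

definition CFB ::
  "nat \<Rightarrow> (nat \<Rightarrow> real^'n \<Rightarrow> real^'a \<Rightarrow> real^'b \<Rightarrow> real^'n) \<Rightarrow>
   (nat \<Rightarrow> real^'n \<Rightarrow> real^'a \<Rightarrow> real^'b \<Rightarrow> real) \<Rightarrow> (real^'n \<Rightarrow> real) \<Rightarrow>
   (nat \<Rightarrow> real^'a) \<Rightarrow> (nat \<Rightarrow> real^'a) \<Rightarrow> (nat \<Rightarrow> real^'n \<Rightarrow> real^'b) \<Rightarrow> nat \<Rightarrow>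
   (nat \<Rightarrow> real^'n) \<Rightarrow> (nat \<Rightarrow> real^'a) \<Rightarrow> (nat \<Rightarrow> real^'b) \<Rightarrow>
   (nat \<Rightarrow> real^'n) \<Rightarrow> (nat \<Rightarrow> real^'a) \<Rightarrow> (nat \<Rightarrow> real^'a) \<Rightarrow> (nat \<Rightarrow> real^'b) \<Rightarrow> bool" where
  "CFB K F L Lf a b piO t x u v lam nl nu psi \<longleftrightarrow>
     (\<forall>s\<in>{t+1..K}. grad (\<lambda>w. L s (x s) (u s) w) (v s)
                    + jacT (\<lambda>w. F s (x s) (u s) w) (v s) (lam s) - psi s = 0) \<and>
     (\<forall>s\<in>{t..K}. grad (\<lambda>w. L s (x s) w (v s)) (u s)
                    + jacT (\<lambda>w. F s (x s) w (v s)) (u s) (lam s) - nl s + nu s = 0) \<and>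
     grad Lf (x (K + 1)) - lam K = 0 \<and>
     (\<forall>s\<in>{t..K}. x (s + 1) = F s (x s) (u s) (v s)) \<and>
     (\<forall>s\<in>{t+1..K}. v s = piO s (x s)) \<and>
     (\<forall>s\<in>{t..K}. box_compl (a s) (b s) (u s) (nl s) (nu s)) \<and>
     (\<forall>s\<in>{t+1..K}. grad (\<lambda>y. L s y (u s) (v s)) (x s) - lam (s - 1)
                    + jacT (\<lambda>y. F s y (u s) (v s)) (x s) (lam s)
                    + jacT (piO s) (x s) (psi s) = 0)"

definition fb_feasible ::
  "nat \<Rightarrow> (nat \<Rightarrow> real^'n \<Rightarrow> real^'a \<Rightarrow> real^'b \<Rightarrow> real^'n) \<Rightarrow>
   (nat \<Rightarrow> real^'a) \<Rightarrow> (nat \<Rightarrow> real^'a) \<Rightarrow> (nat \<Rightarrow> real^'n \<Rightarrow> real^'b) \<Rightarrow> nat \<Rightarrow>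
   real^'n \<Rightarrow> real^'b \<Rightarrow>
   (nat \<Rightarrow> real^'n) \<Rightarrow> (nat \<Rightarrow> real^'a) \<Rightarrow> (nat \<Rightarrow> real^'b) \<Rightarrow> bool" where
  "fb_feasible K F a b piO t xt vt y w z \<longleftrightarrow>
     y t = xt \<and> z t = vt \<and>
     (\<forall>s\<in>{t..K}. y (s + 1) = F s (y s) (w s) (z s)) \<and>
     (\<forall>s\<in>{t+1..K}. z s = piO s (y s)) \<and>
     (\<forall>s\<in>{t..K}. a s \<le> w s \<and> w s \<le> b s)"

definition fb_cost ::
  "nat \<Rightarrow> (nat \<Rightarrow> real^'n \<Rightarrow> real^'a \<Rightarrow> real^'b \<Rightarrow> real) \<Rightarrow> (real^'n \<Rightarrow> real) \<Rightarrow> nat \<Rightarrow>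
   (nat \<Rightarrow> real^'n) \<Rightarrow> (nat \<Rightarrow> real^'a) \<Rightarrow> (nat \<Rightarrow> real^'b) \<Rightarrow> real" where
  "fb_cost K L Lf t y w z = (\<Sum>s=t..K. L s (y s) (w s) (z s)) + Lf (y (K + 1))"

definition fb_local_solution ::
  "nat \<Rightarrow> (nat \<Rightarrow> real^'n \<Rightarrow> real^'a \<Rightarrow> real^'b \<Rightarrow> real^'n) \<Rightarrow>
   (nat \<Rightarrow> real^'n \<Rightarrow> real^'a \<Rightarrow> real^'b \<Rightarrow> real) \<Rightarrow> (real^'n \<Rightarrow> real) \<Rightarrow>
   (nat \<Rightarrow> real^'a) \<Rightarrow> (nat \<Rightarrow> real^'a) \<Rightarrow> (nat \<Rightarrow> real^'n \<Rightarrow> real^'b) \<Rightarrow> nat \<Rightarrow>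
   (nat \<Rightarrow> real^'n) \<Rightarrow> (nat \<Rightarrow> real^'a) \<Rightarrow> (nat \<Rightarrow> real^'b) \<Rightarrow> bool" where
  "fb_local_solution K F L Lf a b piO t x u v \<longleftrightarrow>
     fb_feasible K F a b piO t (x t) (v t) x u v \<and>
     (\<exists>\<epsilon>>0. \<forall>y w z.
        fb_feasible K F a b piO t (x t) (v t) y w z \<and>
        (\<forall>s\<in>{t..K}. dist (w s) (u s) < \<epsilon>) \<and>
        (\<forall>s\<in>{t+1..K}. dist (z s) (v s) < \<epsilon>) \<and>
        (\<forall>s\<in>{t+1..K+1}. dist (y s) (x s) < \<epsilon>)
        \<longrightarrow> fb_cost K L Lf t x u v \<le> fb_cost K L Lf t y w z)"

definition local_FBNE ::
  "nat \<Rightarrow> (nat \<Rightarrow> real^'n \<Rightarrow> real^'m1 \<Rightarrow> real^'m2 \<Rightarrow> real^'n) \<Rightarrow>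
   (nat \<Rightarrow> real^'n \<Rightarrow> real^'m1 \<Rightarrow> real^'m2 \<Rightarrow> real) \<Rightarrow> (real^'n \<Rightarrow> real) \<Rightarrow>
   (nat \<Rightarrow> real^'m1) \<Rightarrow> (nat \<Rightarrow> real^'m1) \<Rightarrow> (nat \<Rightarrow> real^'m2) \<Rightarrow> (nat \<Rightarrow> real^'m2) \<Rightarrow>
   real^'n \<Rightarrow> (nat \<Rightarrow> real^'n \<Rightarrow> real^'m1) \<Rightarrow> (nat \<Rightarrow> real^'n \<Rightarrow> real^'m2) \<Rightarrow>
   (nat \<Rightarrow> real^'n) \<Rightarrow> (nat \<Rightarrow> real^'m1) \<Rightarrow> (nat \<Rightarrow> real^'m2) \<Rightarrow> bool" where
  "local_FBNE K f l lf a1 b1 a2 b2 x1 pi1 pi2 x u1 u2 \<longleftrightarrow>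
     (\<forall>t z. pi1 t differentiable (at z)) \<and> (\<forall>t z. pi2 t differentiable (at z)) \<and>
     x 1 = x1 \<and>
     (\<forall>t\<in>{1..K}. u1 t = pi1 t (x t) \<and> u2 t = pi2 t (x t) \<and>
                   x (t + 1) = f t (x t) (u1 t) (u2 t)) \<and>
     (\<forall>t\<in>{1..K}. fb_local_solution K f l lf a1 b1 pi2 t x u1 u2) \<and>
     (\<forall>t\<in>{1..K}. fb_local_solution K (\<lambda>s y w z. f s y z w) (\<lambda>s y w z. - l s y z w)
                     (\<lambda>y. - lf y) a2 b2 pi1 t x u2 u1)"

definition policy_assumption ::
  "nat \<Rightarrow> (nat \<Rightarrow> real^'a) \<Rightarrow> (nat \<Rightarrow> real^'a) \<Rightarrow> (nat \<Rightarrow> real^'n \<Rightarrow> real^'a) \<Rightarrow>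
   (nat \<Rightarrow> real^'n) \<Rightarrow> (nat \<Rightarrow> real^'a) \<Rightarrow> bool" where
  "policy_assumption K a b P x u \<longleftrightarrow>
     (\<forall>s\<in>{1..K}. \<forall>j. (u s $ j = a s $ j \<or> u s $ j = b s $ j) \<longrightarrow>
        (\<forall>k. frechet_derivative (P s) (at (x s)) (axis k 1) $ j = 0))"

end

theory Submission
  imports Defs
begin

lemma grad_uminus:
  assumes "g differentiable (at z)"
  shows "grad (\<lambda>y. - g y) z = - grad g z"
proof -
  from assms obtain D where D: "(g has_derivative D) (at z)"
    unfolding differentiable_def by blast
  have "((\<lambda>y. - g y) has_derivative (\<lambda>h. - D h)) (at z)"
    using has_derivative_minus[OF D] .
  then have "frechet_derivative (\<lambda>y. - g y) (at z) = (\<lambda>h. - D h)"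
    by (metis frechet_derivative_at)
  moreover have "frechet_derivative g (at z) = D" using D by (metis frechet_derivative_at)
  ultimately show ?thesis unfolding grad_def by (simp add: vec_eq_iff)
qed

lemma jacT_uminus: "jacT F z (- lam) = - jacT F z lam"
  unfolding jacT_def by (simp add: vec_eq_iff)

lemma jacT_zero:
  assumes "\<forall>j. psi$j \<noteq> 0 \<longrightarrow> (\<forall>k. frechet_derivative P (at z) (axis k 1) $ j = 0)"
  shows "jacT P z psi = 0"
  unfolding jacT_def
proof (simp add: vec_eq_iff, intro allI)
  fix k
  show "psi \<bullet> frechet_derivative P (at z) (axis k 1) = 0"
    unfolding inner_vec_def
    by (rule sum.neutral) (use assms in auto)
qed

lemma psi_support:
  assumes "box_compl a b u nl nu"
    and "\<forall>j. (u$j = a$j \<or> u$j = b$j) \<longrightarrow> (\<forall>k. D k $ j = 0)"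
  shows "\<forall>j. (nu - nl)$j \<noteq> 0 \<longrightarrow> (\<forall>k. D k $ j = 0)"
proof (intro allI impI)
  fix j k assume "(nu - nl)$j \<noteq> 0"
  then have "nu$j \<noteq> 0 \<or> nl$j \<noteq> 0" by auto
  moreover have "(u$j - a$j) * nl$j = 0" "nu$j * (b$j - u$j) = 0"
    using assms(1) unfolding box_compl_def by auto
  ultimately have "u$j = a$j \<or> u$j = b$j" by auto
  then show "D k $ j = 0" using assms(2) by blast
qed

lemma diff_part1:
  assumes "\<forall>z. (\<lambda>(y, w1, w2). g y w1 w2) differentiable (at z)"
  shows "(\<lambda>y. g y c d) differentiable (at p)"
proof -
  have "(\<lambda>y. (y, c, d)) differentiable (at p)"
    by (intro derivative_intros)
  from differentiable_chain_at[OF this assms[rule_format]]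
  show ?thesis by (simp add: o_def)
qed

lemma diff_part2:
  assumes "\<forall>z. (\<lambda>(y, w1, w2). g y w1 w2) differentiable (at z)"
  shows "(\<lambda>w. g c w d) differentiable (at p)"
proof -
  have "(\<lambda>w. (c, w, d)) differentiable (at p)"
    by (intro derivative_intros)
  from differentiable_chain_at[OF this assms[rule_format]]
  show ?thesis by (simp add: o_def)
qed

lemma diff_part3:
  assumes "\<forall>z. (\<lambda>(y, w1, w2). g y w1 w2) differentiable (at z)"
  shows "(\<lambda>w. g c d w) differentiable (at p)"
proof -
  have "(\<lambda>w. (c, d, w)) differentiable (at p)"
    by (intro derivative_intros)
  from differentiable_chain_at[OF this assms[rule_format]]
  show ?thesis by (simp add: o_def)
qed

lemma lin1: "(A::'a::ab_group_add) + B - N + V = 0 \<Longrightarrow> - A - B - P = 0 \<Longrightarrow> P = V - N"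
proof -
  assume h: "A + B - N + V = 0" "- A - B - P = 0"
  have "(A + B - N + V) + (- A - B - P) = V - N - P" by (simp add: algebra_simps)
  with h show ?thesis by simp
qed

lemma lin2: "(A::'a::ab_group_add) + B - P = 0 \<Longrightarrow> - A - B - N + V = 0 \<Longrightarrow> P = V - N"
proof -
  assume h: "A + B - P = 0" "- A - B - N + V = 0"
  have "(A + B - P) + (- A - B - N + V) = V - N - P" by (simp add: algebra_simps)
  with h show ?thesis by simp
qed

lemma lin3: "(A::'a::ab_group_add) - L + B = 0 \<Longrightarrow> - A - M - B = 0 \<Longrightarrow> M = - L"
proof -
  assume h: "A - L + B = 0" "- A - M - B = 0"
  have "(A - L + B) + (- A - M - B) = - L - M" by (simp add: algebra_simps)
  with h show ?thesis by (simp add: eq_neg_iff_add_eq_0 add.commute)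
qed

theorem theorem2:
  fixes K :: nat
    and f :: "nat \<Rightarrow> real^'n \<Rightarrow> real^'m1 \<Rightarrow> real^'m2 \<Rightarrow> real^'n"
    and l :: "nat \<Rightarrow> real^'n \<Rightarrow> real^'m1 \<Rightarrow> real^'m2 \<Rightarrow> real"
    and lf :: "real^'n \<Rightarrow> real"
    and a1 b1 :: "nat \<Rightarrow> real^'m1" and a2 b2 :: "nat \<Rightarrow> real^'m2"
    and x1 :: "real^'n"
    and pi1 :: "nat \<Rightarrow> real^'n \<Rightarrow> real^'m1" and pi2 :: "nat \<Rightarrow> real^'n \<Rightarrow> real^'m2"
    and x :: "nat \<Rightarrow> real^'n" and u1 :: "nat \<Rightarrow> real^'m1" and u2 :: "nat \<Rightarrow> real^'m2"
  assumes f_smooth: "\<forall>t z. (\<lambda>(y, w1, w2). f t y w1 w2) differentiable (at z)"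
    and l_smooth: "\<forall>t z. (\<lambda>(y, w1, w2). l t y w1 w2) differentiable (at z)"
    and lf_smooth: "\<forall>z. lf differentiable (at z)"
    and fbne: "local_FBNE K f l lf a1 b1 a2 b2 x1 pi1 pi2 x u1 u2"
    and sc1: "\<forall>t\<in>{1..K}. \<exists>lam nl nu psi.
               CFB K f l lf a1 b1 pi2 t x u1 u2 lam nl nu psi \<and>
               (\<forall>s\<in>{t..K}. strict_compl (a1 s) (b1 s) (u1 s) (nl s) (nu s))"
    and sc2: "\<forall>t\<in>{1..K}. \<exists>lam nl nu psi.
               CFB K (\<lambda>s y w z. f s y z w) (\<lambda>s y w z. - l s y z w) (\<lambda>y. - lf y)
                   a2 b2 pi1 t x u2 u1 lam nl nu psi \<and>
               (\<forall>s\<in>{t..K}. strict_compl (a2 s) (b2 s) (u2 s) (nl s) (nu s))"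
    and pol1: "policy_assumption K a1 b1 pi1 x u1"
    and pol2: "policy_assumption K a2 b2 pi2 x u2"
  shows "(\<exists>lam nl nu. COL K f l lf a1 b1 x u1 u2 lam nl nu) \<and>
         (\<exists>lam nl nu. COL K (\<lambda>s y w z. f s y z w) (\<lambda>s y w z. - l s y z w) (\<lambda>y. - lf y)
                        a2 b2 x u2 u1 lam nl nu)"
  proof (cases "K = 0")
  case True
  have "COL K f l lf a1 b1 x u1 u2 (\<lambda>_. grad lf (x 1)) u1 u1"
    unfolding COL_def using True by simp
  moreover have "COL K (\<lambda>s y w z. f s y z w) (\<lambda>s y w z. - l s y z w) (\<lambda>y. - lf y)
                        a2 b2 x u2 u1 (\<lambda>_. grad (\<lambda>y. - lf y) (x 1)) u2 u2"
    unfolding COL_def using True by simp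
  ultimately show ?thesis by blast
next
  case False
  then have K1: "1 \<in> {1..K}" by simp
  obtain lam1 nl1 nu1 psi1 where C1: "CFB K f l lf a1 b1 pi2 1 x u1 u2 lam1 nl1 nu1 psi1"
    using sc1 K1 by blast
  obtain lam2 nl2 nu2 psi2 where C2: "CFB K (\<lambda>s y w z. f s y z w) (\<lambda>s y w z. - l s y z w) (\<lambda>y. - lf y)
                   a2 b2 pi1 1 x u2 u1 lam2 nl2 nu2 psi2"
    using sc2 K1 by blast
  note C1' = C1[unfolded CFB_def] and C2' = C2[unfolded CFB_def]
  note A1 = C1'[THEN conjunct1] and B1 = C1'[THEN conjunct2, THEN conjunct1]
    and G1 = C1'[THEN conjunct2, THEN conjunct2, THEN conjunct2, THEN conjunct2, THEN conjunct2, THEN conjunct2]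
  note A2 = C2'[THEN conjunct1] and B2 = C2'[THEN conjunct2, THEN conjunct1]
    and G2 = C2'[THEN conjunct2, THEN conjunct2, THEN conjunct2, THEN conjunct2, THEN conjunct2, THEN conjunct2]
  have dl1: "\<And>s c d p. (\<lambda>y. l s y c d) differentiable (at p)"
    using diff_part1[of "l s" for s] l_smooth by blast
  have dl2: "\<And>s c d p. (\<lambda>w. l s c w d) differentiable (at p)"
    using diff_part2[of "l s" for s] l_smooth by blast
  have dl3: "\<And>s c d p. (\<lambda>w. l s c d w) differentiable (at p)"
    using diff_part3[of "l s" for s] l_smooth by blast
  have bc1: "\<And>s. s \<in> {1..K} \<Longrightarrow> box_compl (a1 s) (b1 s) (u1 s) (nl1 s) (nu1 s)"
    using C1' by simp
  have bc2: "\<And>s. s \<in> {1..K} \<Longrightarrow> box_compl (a2 s) (b2 s) (u2 s) (nl2 s) (nu2 s)"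
    using C2' by simp
  have psi1_eq: "psi1 s = nu2 s - nl2 s" if s: "s \<in> {2..K}" and h: "lam2 s = - lam1 s" for s
  proof -
    have e1: "grad (\<lambda>w. l s (x s) (u1 s) w) (u2 s) + jacT (\<lambda>w. f s (x s) (u1 s) w) (u2 s) (lam1 s) - psi1 s = 0"
      using bspec[OF A1, of s] s by simp
    have e2: "grad (\<lambda>w. - l s (x s) (u1 s) w) (u2 s) + jacT (\<lambda>w. f s (x s) (u1 s) w) (u2 s) (lam2 s) - nl2 s + nu2 s = 0"
      using bspec[OF B2, of s] s by simp
    have e2': "- grad (\<lambda>w. l s (x s) (u1 s) w) (u2 s) - jacT (\<lambda>w. f s (x s) (u1 s) w) (u2 s) (lam1 s) - nl2 s + nu2 s = 0"
      using e2 unfolding h jacT_uminus grad_uminus[OF dl3] by simp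
    show ?thesis using lin2[OF e1 e2'] .
  qed
  have psi2_eq: "psi2 s = nu1 s - nl1 s" if s: "s \<in> {2..K}" and h: "lam2 s = - lam1 s" for s
  proof -
    have e1: "grad (\<lambda>w. l s (x s) w (u2 s)) (u1 s) + jacT (\<lambda>w. f s (x s) w (u2 s)) (u1 s) (lam1 s) - nl1 s + nu1 s = 0"
      using bspec[OF B1, of s] s by simp
    have e2: "grad (\<lambda>w. - l s (x s) w (u2 s)) (u1 s) + jacT (\<lambda>w. f s (x s) w (u2 s)) (u1 s) (lam2 s) - psi2 s = 0"
      using bspec[OF A2, of s] s by simp
    have e2': "- grad (\<lambda>w. l s (x s) w (u2 s)) (u1 s) - jacT (\<lambda>w. f s (x s) w (u2 s)) (u1 s) (lam1 s) - psi2 s = 0"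
      using e2 unfolding h jacT_uminus grad_uminus[OF dl2] by simp
    show ?thesis using lin1[OF e1 e2'] .
  qed
  have J1: "jacT (pi2 s) (x s) (psi1 s) = 0" if s: "s \<in> {2..K}" and h: "lam2 s = - lam1 s" for s
  proof -
    have s1: "s \<in> {1..K}" using s by simp
    have "\<forall>j. (nu2 s - nl2 s)$j \<noteq> 0 \<longrightarrow> (\<forall>k. frechet_derivative (pi2 s) (at (x s)) (axis k 1) $ j = 0)"
      by (rule psi_support[OF bc2[OF s1]]) (use pol2 s1 in \<open>simp add: policy_assumption_def\<close>)
    then show ?thesis using psi1_eq[OF s h] by (simp add: jacT_zero)
  qed
  have J2: "jacT (pi1 s) (x s) (psi2 s) = 0" if s: "s \<in> {2..K}" and h: "lam2 s = - lam1 s" for s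
  proof -
    have s1: "s \<in> {1..K}" using s by simp
    have "\<forall>j. (nu1 s - nl1 s)$j \<noteq> 0 \<longrightarrow> (\<forall>k. frechet_derivative (pi1 s) (at (x s)) (axis k 1) $ j = 0)"
      by (rule psi_support[OF bc1[OF s1]]) (use pol1 s1 in \<open>simp add: policy_assumption_def\<close>)
    then show ?thesis using psi2_eq[OF s h] by (simp add: jacT_zero)
  qed
  have step: "lam2 (s - 1) = - lam1 (s - 1)" if s: "s \<in> {2..K}" and h: "lam2 s = - lam1 s" for s
  proof -
    have e1: "grad (\<lambda>y. l s y (u1 s) (u2 s)) (x s) - lam1 (s - 1) + jacT (\<lambda>y. f s y (u1 s) (u2 s)) (x s) (lam1 s) = 0"
      using bspec[OF G1, of s] s J1[OF s h] by simp
    have e2: "grad (\<lambda>y. - l s y (u1 s) (u2 s)) (x s) - lam2 (s - 1) + jacT (\<lambda>y. f s y (u1 s) (u2 s)) (x s) (lam2 s) = 0"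
      using bspec[OF G2, of s] s J2[OF s h] by simp
    have e2': "- grad (\<lambda>y. l s y (u1 s) (u2 s)) (x s) - lam2 (s - 1) - jacT (\<lambda>y. f s y (u1 s) (u2 s)) (x s) (lam1 s) = 0"
      using e2 unfolding h jacT_uminus grad_uminus[OF dl1] by simp
    show ?thesis using lin3[OF e1 e2'] .
  qed
  have lamK: "lam2 K = - lam1 K"
  proof -
    have "grad lf (x (K + 1)) - lam1 K = 0" using C1' by simp
    moreover have "grad (\<lambda>y. - lf y) (x (K + 1)) - lam2 K = 0" using C2' by simp
    ultimately show ?thesis using grad_uminus[OF lf_smooth[rule_format]] by simp
  qed
  have ind: "k < K \<longrightarrow> lam2 (K - k) = - lam1 (K - k)" for k
  proof (induction k)
    case 0 then show ?case using lamK by simp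
  next
    case (Suc k)
    show ?case
    proof
      assume "Suc k < K"
      then have m: "K - k \<in> {2..K}" "K - Suc k = K - k - 1" by auto
      have "lam2 (K - k) = - lam1 (K - k)" using Suc \<open>Suc k < K\<close> by simp
      from step[OF m(1) this] show "lam2 (K - Suc k) = - lam1 (K - Suc k)"
        unfolding m(2) .
    qed
  qed
  have lameq: "lam2 s = - lam1 s" if "s \<in> {2..K}" for s
    using ind[of "K - s"] that by auto
  have c11: "grad (\<lambda>y. l s y (u1 s) (u2 s)) (x s)
                    + jacT (\<lambda>y. f s y (u1 s) (u2 s)) (x s) (lam1 s) - lam1 (s - 1) = 0"
    if s: "s \<in> {2..K}" for s
  proof -
    have "grad (\<lambda>y. l s y (u1 s) (u2 s)) (x s) - lam1 (s - 1)
                    + jacT (\<lambda>y. f s y (u1 s) (u2 s)) (x s) (lam1 s)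
                    + jacT (pi2 s) (x s) (psi1 s) = 0" using bspec[OF G1, of s] s by simp
    then show ?thesis unfolding J1[OF s lameq[OF s]] by (simp add: algebra_simps)
  qed
  have c21: "grad (\<lambda>y. - l s y (u1 s) (u2 s)) (x s)
                    + jacT (\<lambda>y. f s y (u1 s) (u2 s)) (x s) (lam2 s) - lam2 (s - 1) = 0"
    if s: "s \<in> {2..K}" for s
  proof -
    have "grad (\<lambda>y. - l s y (u1 s) (u2 s)) (x s) - lam2 (s - 1)
                    + jacT (\<lambda>y. f s y (u1 s) (u2 s)) (x s) (lam2 s)
                    + jacT (pi1 s) (x s) (psi2 s) = 0" using bspec[OF G2, of s] s by simp
    then show ?thesis unfolding J2[OF s lameq[OF s]] by (simp add: algebra_simps)
  qed
  have "COL K f l lf a1 b1 x u1 u2 lam1 nl1 nu1"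
    unfolding COL_def
  proof (intro conjI ballI)
    fix s assume "s \<in> {2..K}" then show "grad (\<lambda>y. l s y (u1 s) (u2 s)) (x s)
                    + jacT (\<lambda>y. f s y (u1 s) (u2 s)) (x s) (lam1 s) - lam1 (s - 1) = 0" by (rule c11)
  qed (use B1 C1' in auto)
  moreover have "COL K (\<lambda>s y w z. f s y z w) (\<lambda>s y w z. - l s y z w) (\<lambda>y. - lf y)
                        a2 b2 x u2 u1 lam2 nl2 nu2"
    unfolding COL_def
  proof (intro conjI ballI)
    fix s assume "s \<in> {2..K}" then show "grad (\<lambda>y. - l s y (u1 s) (u2 s)) (x s)
                    + jacT (\<lambda>y. f s y (u1 s) (u2 s)) (x s) (lam2 s) - lam2 (s - 1) = 0" by (rule c21)
  qed (use B2 C2' in auto)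
  ultimately show ?thesis by blast
qed

end
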